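(* Let $n\ge 1$ and let $G=K_{n_1,\dots,n_p}$ be a complete $p$-partite graph of order $2^n$ (so $n_1+\dots+n_p=2^n$, each $n_i\ge 1$). Then $\mathrm{dil}(G,Q_n)=n$ if at least one $n_i$ is odd, and $\mathrm{dil}(G,Q_n)\le n-1$ if all $n_i$ are even. *)

theory Defs
  imports Main
begin

definition graph_dist :: "'a set \<Rightarrow> ('a \<Rightarrow> 'a \<Rightarrow> bool) \<Rightarrow> 'a \<Rightarrow> 'a \<Rightarrow> nat" where
  "graph_dist V E x y = (LEAST k. \<exists>ps. length ps = Suc k \<and> hd ps = x \<and> last ps = y \<and>
       set ps \<subseteq> V \<and> (\<forall>i<k. E (ps ! i) (ps ! Suc i)))"

(* hypercube Q_n: vertices = subsets of {0..<n} (0/1 vectors of length n),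
   adjacent iff they differ in exactly one coordinate *)
definition cube_verts :: "nat \<Rightarrow> nat set set" where
  "cube_verts n = Pow {..<n}"

definition cube_adj :: "nat \<Rightarrow> nat set \<Rightarrow> nat set \<Rightarrow> bool" where
  "cube_adj n A B \<longleftrightarrow> A \<subseteq> {..<n} \<and> B \<subseteq> {..<n} \<and> card ((A - B) \<union> (B - A)) = 1"

(* complete p-partite graph K_{ns 0, ..., ns (p-1)}: vertex (i,j) is the j-th vertex of part i *)
definition kpart_verts :: "nat \<Rightarrow> (nat \<Rightarrow> nat) \<Rightarrow> (nat \<times> nat) set" where
  "kpart_verts p ns = {(i, j). i < p \<and> j < ns i}"

definition kpart_adj :: "(nat \<times> nat) \<Rightarrow> (nat \<times> nat) \<Rightarrow> bool" where
  "kpart_adj u v \<longleftrightarrow> fst u \<noteq> fst v"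

(* dilation of an embedding f of guest (V,E) into host (W,F): max host distance over guest edges
   (0 if the guest has no edges) *)
definition dilation :: "'a set \<Rightarrow> ('a \<Rightarrow> 'a \<Rightarrow> bool) \<Rightarrow> 'b set \<Rightarrow> ('b \<Rightarrow> 'b \<Rightarrow> bool)
    \<Rightarrow> ('a \<Rightarrow> 'b) \<Rightarrow> nat" where
  "dilation V E W F f = Sup {graph_dist W F (f u) (f v) | u v. u \<in> V \<and> v \<in> V \<and> E u v}"

definition dil :: "'a set \<Rightarrow> ('a \<Rightarrow> 'a \<Rightarrow> bool) \<Rightarrow> 'b set \<Rightarrow> ('b \<Rightarrow> 'b \<Rightarrow> bool) \<Rightarrow> nat" where
  "dil V E W F = Inf {dilation V E W F f | f. bij_betw f V W}"

end

theory Submission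
  imports Defs
begin


definition sd :: "nat set \<Rightarrow> nat set \<Rightarrow> nat set" where "sd A B = (A - B) \<union> (B - A)"

lemma walk_exists:
  assumes "A \<subseteq> {..<n}" "B \<subseteq> {..<n}"
  shows "\<exists>ps. length ps = Suc (card (sd A B)) \<and> hd ps = A \<and> last ps = B \<and> set ps \<subseteq> Pow {..<n}
     \<and> (\<forall>i<card (sd A B). cube_adj n (ps!i) (ps!Suc i))"
  using assms
proof (induction "card (sd A B)" arbitrary: A)
  case 0
  have "finite (sd A B)" using 0(2,3) by (auto simp: sd_def intro: finite_subset)
  then have "sd A B = {}" using 0(1) by simp
  then have "A = B" by (auto simp: sd_def)
  then show ?case using 0 by (intro exI[of _ "[A]"]) (simp add: sd_def[symmetric])
next
  case (Suc m A)
  have fin: "finite (sd A B)" using Suc(3,4) by (auto simp: sd_def intro: finite_subset)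
  then have "sd A B \<noteq> {}" using Suc(2) by (metis card.empty nat.distinct(1))
  then obtain x where x: "x \<in> sd A B" by blast
  define A' where "A' = (if x \<in> A then A - {x} else insert x A)"
  have xn: "x < n" using x Suc(3,4) by (auto simp: sd_def)
  have sdA': "sd A' B = sd A B - {x}" using x by (auto simp: sd_def A'_def)
  have cA': "m = card (sd A' B)" using sdA' Suc(2) fin x by simp
  have A'n: "A' \<subseteq> {..<n}" using Suc(3) xn by (auto simp: A'_def)
  obtain ps' where ps': "length ps' = Suc m" "hd ps' = A'" "last ps' = B" "set ps' \<subseteq> Pow {..<n}"
     "\<forall>i<m. cube_adj n (ps'!i) (ps'!Suc i)"
    using Suc(1)[OF cA' A'n Suc(4)] cA' by auto
  have adj: "cube_adj n A A'"
  proof -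
    have "(A - A') \<union> (A' - A) = {x}" by (auto simp: A'_def)
    then show ?thesis using A'n Suc(3) by (simp add: cube_adj_def)
  qed
  have ne: "ps' \<noteq> []" using ps'(1) by auto
  show ?case
  proof (intro exI[of _ "A # ps'"] conjI)
    show "\<forall>i<card (sd A B). cube_adj n ((A # ps') ! i) ((A # ps') ! Suc i)"
    proof (intro allI impI)
      fix i assume "i < card (sd A B)"
      then have i: "i < Suc m" using Suc(2) by simp
      show "cube_adj n ((A # ps') ! i) ((A # ps') ! Suc i)"
      proof (cases i)
        case 0 then show ?thesis using adj ps'(2) ne by (simp add: hd_conv_nth)
      next
        case (Suc j) then show ?thesis using ps'(5) i by simp
      qed
    qed
  qed (use ps' ne Suc(2,3) in auto)
qed

lemma dist_le:
  assumes "A \<subseteq> {..<n}" "B \<subseteq> {..<n}"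
  shows "graph_dist (cube_verts n) (cube_adj n) A B \<le> card (sd A B)"
  unfolding graph_dist_def cube_verts_def
  by (rule Least_le) (rule walk_exists[OF assms])

lemma walk_lower:
  "length ps = Suc k \<Longrightarrow> set ps \<subseteq> Pow {..<n} \<Longrightarrow> (\<forall>i<k. cube_adj n (ps!i) (ps!Suc i))
   \<Longrightarrow> card (sd (hd ps) (last ps)) \<le> k"
proof (induction k arbitrary: ps)
  case 0
  then obtain a where "ps = [a]" by (metis length_0_conv length_Suc_conv)
  then show ?case by (simp add: sd_def)
next
  case (Suc k)
  then obtain a ps' where ps: "ps = a # ps'" by (cases ps) auto
  have l: "length ps' = Suc k" using Suc(2) ps by simp
  then have ne: "ps' \<noteq> []" by auto
  have st: "set ps' \<subseteq> Pow {..<n}" using Suc(3) ps by auto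
  have ad: "\<forall>i<k. cube_adj n (ps'!i) (ps'!Suc i)" using Suc(4) ps by auto
  have IH: "card (sd (hd ps') (last ps')) \<le> k" using Suc(1)[OF l st ad] .
  have "cube_adj n a (ps'!0)" using Suc(4) ps by auto
  then have c1: "card (sd a (hd ps')) = 1" using ne by (simp add: cube_adj_def sd_def hd_conv_nth)
  have "sd a (last ps') \<subseteq> sd a (hd ps') \<union> sd (hd ps') (last ps')" by (auto simp: sd_def)
  moreover have "finite (sd a (hd ps') \<union> sd (hd ps') (last ps'))"
  proof -
    have "hd ps' \<in> Pow {..<n}" using st hd_in_set[OF ne] by blast
    moreover have "last ps' \<in> Pow {..<n}" using st last_in_set[OF ne] by blast
    moreover have "a \<subseteq> {..<n}" using Suc(3) ps by auto
    ultimately have "hd ps' \<subseteq> {..<n}" "last ps' \<subseteq> {..<n}" "a \<subseteq> {..<n}" by auto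
    then show ?thesis by (auto simp: sd_def intro: finite_subset)
  qed
  ultimately have "card (sd a (last ps')) \<le> card (sd a (hd ps') \<union> sd (hd ps') (last ps'))"
    by (rule card_mono[rotated])
  also have "\<dots> \<le> Suc k" using card_Un_le[of "sd a (hd ps')" "sd (hd ps') (last ps')"] c1 IH by simp
  finally show ?case using ps ne by simp
qed

lemma dist_eq:
  assumes "A \<subseteq> {..<n}" "B \<subseteq> {..<n}"
  shows "graph_dist (cube_verts n) (cube_adj n) A B = card (sd A B)"
proof (rule antisym[OF dist_le[OF assms]])
  let ?P = "\<lambda>k. \<exists>ps. length ps = Suc k \<and> hd ps = A \<and> last ps = B \<and> set ps \<subseteq> Pow {..<n}
     \<and> (\<forall>i<k. cube_adj n (ps!i) (ps!Suc i))"
  have "?P (card (sd A B))" using walk_exists[OF assms] .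
  then have "?P (Least ?P)" by (rule LeastI)
  then obtain ps where ps: "length ps = Suc (Least ?P)" "hd ps = A" "last ps = B" "set ps \<subseteq> Pow {..<n}"
     "\<forall>i<Least ?P. cube_adj n (ps!i) (ps!Suc i)" by blast
  have "card (sd (hd ps) (last ps)) \<le> Least ?P" using walk_lower[OF ps(1) ps(4) ps(5)] .
  then have "card (sd A B) \<le> Least ?P" using ps(2,3) by simp
  then show "card (sd A B) \<le> graph_dist (cube_verts n) (cube_adj n) A B"
    unfolding graph_dist_def cube_verts_def by simp
qed

lemma inv_even:
  "finite S \<Longrightarrow> \<forall>x\<in>S. \<sigma> x \<in> S \<and> \<sigma> x \<noteq> x \<and> \<sigma> (\<sigma> x) = x \<Longrightarrow> even (card S)"
proof (induction S rule: finite_psubset_induct)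
  case (psubset S)
  have P: "\<sigma> z \<in> S" "\<sigma> z \<noteq> z" "\<sigma> (\<sigma> z) = z" if "z \<in> S" for z
    using psubset(3) that by blast+
  show ?case
  proof (cases "S = {}")
    case True then show ?thesis by simp
  next
    case False
    then obtain x where x: "x \<in> S" by blast
    let ?S' = "S - {x, \<sigma> x}"
    have sub: "?S' \<subset> S" using x by blast
    have inv: "\<forall>y\<in>?S'. \<sigma> y \<in> ?S' \<and> \<sigma> y \<noteq> y \<and> \<sigma> (\<sigma> y) = y"
    proof
      fix y assume y: "y \<in> ?S'"
      then have yS: "y \<in> S" "y \<noteq> x" "y \<noteq> \<sigma> x" by blast+
      note a = P[OF yS(1)]
      have "\<sigma> y \<noteq> x" using yS(3) a(3) by metis
      moreover have "\<sigma> y \<noteq> \<sigma> x" using yS(2) a(3) P(3)[OF x] by metis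
      ultimately show "\<sigma> y \<in> ?S' \<and> \<sigma> y \<noteq> y \<and> \<sigma> (\<sigma> y) = y" using a by blast
    qed
    have e: "even (card ?S')" using psubset(2)[OF sub inv] .
    have sx1: "{x, \<sigma> x} \<subseteq> S" using x P(1)[OF x] by blast
    have sx2: "card {x, \<sigma> x} = 2" using P(2)[OF x] by simp
    have "card ?S' = card S - 2" using card_Diff_subset[OF _ sx1] sx2 by simp
    moreover have "card S \<ge> 2" using card_mono[OF psubset(1) sx1] sx2 by simp
    ultimately have "card S = card ?S' + 2" by simp
    then show ?thesis using e by simp
  qed
qed



lemma kv_eq: "kpart_verts p ns = Sigma {..<p} (\<lambda>i. {..<ns i})"
  by (auto simp: kpart_verts_def)

lemma dilation_le:
  assumes "\<And>u v. u \<in> V \<Longrightarrow> v \<in> V \<Longrightarrow> E u v \<Longrightarrow> graph_dist W F (f u) (f v) \<le> m"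
  shows "dilation V E W F f \<le> m"
proof -
  let ?S = "{graph_dist W F (f u) (f v) | u v. u \<in> V \<and> v \<in> V \<and> E u v}"
  show ?thesis
  proof (cases "?S = {}")
    case True then show ?thesis unfolding dilation_def by (simp only: True Sup_nat_def) simp
  next
    case False
    then show ?thesis unfolding dilation_def using assms by (intro cSup_least) auto
  qed
qed

lemma cube_dist_le_n:
  assumes "A \<subseteq> {..<n}" "B \<subseteq> {..<n}"
  shows "graph_dist (cube_verts n) (cube_adj n) A B \<le> n"
proof -
  have "sd A B \<subseteq> {..<n}" using assms by (auto simp: sd_def)
  then have "card (sd A B) \<le> card {..<n}" by (rule card_mono[OF finite_lessThan])
  then have "card (sd A B) \<le> n" by simp
  then show ?thesis using dist_eq[OF assms] by simp
qed

lemma cube_dist_le_n1: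
  assumes "A \<subseteq> {..<n}" "B \<subseteq> {..<n}" "B \<noteq> {..<n} - A"
  shows "graph_dist (cube_verts n) (cube_adj n) A B \<le> n - 1"
proof -
  have s: "sd A B \<subseteq> {..<n}" using assms by (auto simp: sd_def)
  have "sd A B \<noteq> {..<n}" using assms by (auto simp: sd_def)
  then have "sd A B \<subset> {..<n}" using s by auto
  then have "card (sd A B) < card {..<n}" by (rule psubset_card_mono[OF finite_lessThan])
  then have "card (sd A B) < n" by simp
  then show ?thesis using dist_eq[OF assms(1,2)] by simp
qed

lemma cube_dist_antipodal:
  assumes "A \<subseteq> {..<n}"
  shows "graph_dist (cube_verts n) (cube_adj n) A ({..<n} - A) = n"
proof -
  have "sd A ({..<n} - A) = {..<n}" using assms by (auto simp: sd_def)
  then show ?thesis using dist_eq[OF assms, of "{..<n} - A"] by simp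
qed

theorem mainTheorem4:
  fixes n p :: nat and ns :: "nat \<Rightarrow> nat"
  assumes "n \<ge> 1"
    and "\<forall>i<p. ns i \<ge> 1"
    and "(\<Sum>i<p. ns i) = 2 ^ n"
  shows "((\<exists>i<p. odd (ns i)) \<longrightarrow>
            dil (kpart_verts p ns) kpart_adj (cube_verts n) (cube_adj n) = n)
       \<and> ((\<forall>i<p. even (ns i)) \<longrightarrow>
            dil (kpart_verts p ns) kpart_adj (cube_verts n) (cube_adj n) \<le> n - 1)"
proof -
  define V where "V = kpart_verts p ns"
  define W where "W = cube_verts n"
  have finV: "finite V" unfolding V_def kv_eq by auto
  have cardV: "card V = 2 ^ n" unfolding V_def kv_eq using assms(3) by (simp add: card_SigmaI)
  have finW: "finite W" unfolding W_def cube_verts_def by auto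
  have cardW: "card W = 2 ^ n" unfolding W_def cube_verts_def by (simp add: card_Pow)
  have Wsub: "\<And>A. A \<in> W \<longleftrightarrow> A \<subseteq> {..<n}" unfolding W_def cube_verts_def by auto
  have dil_le: "dilation V kpart_adj W (cube_adj n) f \<le> n" if "bij_betw f V W" for f
    using that unfolding W_def
    by (intro dilation_le cube_dist_le_n) (auto simp: bij_betw_def cube_verts_def)
  have ex_bij: "\<exists>f. bij_betw f V W" using finite_same_card_bij[OF finV finW] cardV cardW by simp
  have part1: "dil V kpart_adj W (cube_adj n) = n" if odd: "\<exists>i<p. odd (ns i)"
  proof -
    have ge: "dilation V kpart_adj W (cube_adj n) f \<ge> n" if bij: "bij_betw f V W" for f
    proof -
      have "\<exists>u\<in>V. \<exists>v\<in>V. kpart_adj u v \<and> f v = {..<n} - f u"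
      proof (rule ccontr)
        assume na: "\<not> ?thesis"
        define \<sigma> where "\<sigma> x = inv_into V f ({..<n} - f x)" for x
        have fx: "f x \<subseteq> {..<n}" if "x \<in> V" for x
          using bij that Wsub by (auto simp: bij_betw_def)
        have props: "\<sigma> x \<in> V \<and> f (\<sigma> x) = {..<n} - f x \<and> fst (\<sigma> x) = fst x \<and> \<sigma> x \<noteq> x \<and> \<sigma> (\<sigma> x) = x"
          if x: "x \<in> V" for x
        proof -
          have fV: "f ` V = W" using bij by (simp add: bij_betw_def)
          have "{..<n} - f x \<in> W" using Wsub by blast
          then have cw: "{..<n} - f x \<in> f ` V" using fV by simp
          have s1: "\<sigma> x \<in> V" unfolding \<sigma>_def using cw by (rule inv_into_into)
          have s2: "f (\<sigma> x) = {..<n} - f x" unfolding \<sigma>_def using cw by (rule f_inv_into_f)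
          have s3: "fst (\<sigma> x) = fst x"
          proof (rule ccontr)
            assume "fst (\<sigma> x) \<noteq> fst x"
            then have "kpart_adj x (\<sigma> x)" by (simp add: kpart_adj_def)
            then have "\<exists>u\<in>V. \<exists>v\<in>V. kpart_adj u v \<and> f v = {..<n} - f u"
              using s1 s2 x by (intro bexI[of _ x] bexI[of _ "\<sigma> x"] conjI)
            then show False by (rule notE[OF na])
          qed
          have n0: "(0::nat) \<in> {..<n}" using assms(1) by simp
          have "f x \<noteq> {..<n} - f x"
          proof
            assume e: "f x = {..<n} - f x"
            show False
            proof (cases "0 \<in> f x")
              case True then have "0 \<in> {..<n} - f x" using e by simp
              then show False using True by simp
            next
              case False then have "0 \<in> {..<n} - f x" using n0 by simp
              then show False using False e by simp
            qed
          qed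
          then have s4: "\<sigma> x \<noteq> x"
          proof (rule contrapos_nn)
            assume "\<sigma> x = x"
            then show "f x = {..<n} - f x" using s2 by simp
          qed
          have "{..<n} - ({..<n} - f x) = f x" using fx[OF x] by auto
          then have "{..<n} - f (\<sigma> x) = f x" using s2 by simp
          then have "\<sigma> (\<sigma> x) = inv_into V f (f x)" by (simp add: \<sigma>_def[of "\<sigma> x"])
          also have "\<dots> = x" using bij x by (simp add: bij_betw_def inv_into_f_f)
          finally have s5: "\<sigma> (\<sigma> x) = x" .
          show ?thesis using s1 s2 s3 s4 s5 by (intro conjI)
        qed
        obtain i where i: "i < p" "odd (ns i)" using odd by blast
        define S where "S = {x \<in> V. fst x = i}"
        have "S = {i} \<times> {..<ns i}" unfolding S_def V_def kv_eq using i by auto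
        then have cS: "card S = ns i" by (simp add: card_cartesian_product)
        have "finite S" unfolding S_def using finV by simp
        moreover have "\<forall>x\<in>S. \<sigma> x \<in> S \<and> \<sigma> x \<noteq> x \<and> \<sigma> (\<sigma> x) = x"
        proof
          fix x assume "x \<in> S"
          then have x: "x \<in> V" "fst x = i" unfolding S_def by simp_all
          note pr = props[OF x(1)]
          then have "\<sigma> x \<in> S" using x(2) unfolding S_def by simp
          then show "\<sigma> x \<in> S \<and> \<sigma> x \<noteq> x \<and> \<sigma> (\<sigma> x) = x" using pr by blast
        qed
        ultimately have "even (card S)" by (rule inv_even)
        then show False using cS i by simp
      qed
      then obtain u v where uv: "u \<in> V" "v \<in> V" "kpart_adj u v" "f v = {..<n} - f u" by blast
      have "f u \<subseteq> {..<n}" using bij uv Wsub by (auto simp: bij_betw_def)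
      then have gn: "graph_dist W (cube_adj n) (f u) (f v) = n"
        unfolding W_def using uv(4) cube_dist_antipodal by simp
      have bd: "bdd_above {graph_dist W (cube_adj n) (f u) (f v) | u v. u \<in> V \<and> v \<in> V \<and> kpart_adj u v}"
      proof -
        have "\<forall>x\<in>{graph_dist W (cube_adj n) (f u) (f v) | u v. u \<in> V \<and> v \<in> V \<and> kpart_adj u v}. x \<le> n"
        proof
          fix x assume "x \<in> {graph_dist W (cube_adj n) (f u) (f v) | u v. u \<in> V \<and> v \<in> V \<and> kpart_adj u v}"
          then obtain u v where "u \<in> V" "v \<in> V" "x = graph_dist W (cube_adj n) (f u) (f v)" by blast
          moreover have "f u \<in> W" "f v \<in> W" using bij calculation(1,2) by (auto simp: bij_betw_def)
          ultimately show "x \<le> n" using Wsub unfolding W_def by (simp add: cube_dist_le_n)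
        qed
        then show ?thesis by (intro bdd_aboveI) blast
      qed
      have mem: "graph_dist W (cube_adj n) (f u) (f v) \<in> {graph_dist W (cube_adj n) (f u) (f v) | u v. u \<in> V \<and> v \<in> V \<and> kpart_adj u v}"
        using uv by blast
      show ?thesis unfolding dilation_def using cSup_upper[OF mem bd] gn by simp
    qed
    have "{dilation V kpart_adj W (cube_adj n) f | f. bij_betw f V W} = {n}"
    proof (rule set_eqI, rule iffI)
      fix x assume "x \<in> {dilation V kpart_adj W (cube_adj n) f | f. bij_betw f V W}"
      then obtain f where "bij_betw f V W" "x = dilation V kpart_adj W (cube_adj n) f" by blast
      then show "x \<in> {n}" using ge dil_le by (simp add: antisym)
    next
      fix x assume "x \<in> {n}"
      obtain f where f: "bij_betw f V W" using ex_bij by blast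
      then have "dilation V kpart_adj W (cube_adj n) f = n" using ge dil_le by (simp add: antisym)
      moreover have "x = n" using \<open>x \<in> {n}\<close> by simp
      ultimately show "x \<in> {dilation V kpart_adj W (cube_adj n) f | f. bij_betw f V W}" using f by (intro CollectI exI[of _ f]) simp
    qed
    then show ?thesis unfolding dil_def by simp
  qed
  have part2: "dil V kpart_adj W (cube_adj n) \<le> n - 1" if ev: "\<forall>i<p. even (ns i)"
  proof -
    define H where "H = {A. A \<subseteq> {..<n} \<and> n - 1 \<notin> A}"
    have e1: "{..<n-1} = {..<n} - {n-1}" using assms(1) by auto
    have "H = Pow {..<n-1}" unfolding H_def e1 by auto
    then have cH: "card H = 2 ^ (n - 1)" "finite H" by (auto simp: card_Pow)
    define V' where "V' = Sigma {..<p} (\<lambda>i. {..<ns i div 2})"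
    have "2 * (\<Sum>i<p. ns i div 2) = (\<Sum>i<p. ns i)"
      by (simp add: sum_distrib_left) (rule sum.cong, auto simp: ev)
    also have "\<dots> = 2 * 2 ^ (n - 1)" using assms(1,3) power_minus_mult[of n "2::nat"] by (simp add: mult.commute)
    finally have cV': "card V' = 2 ^ (n - 1)" unfolding V'_def by (simp add: card_SigmaI)
    have "finite V'" unfolding V'_def by auto
    then have "\<exists>h. bij_betw h V' H" using cH cV' by (intro finite_same_card_bij) simp_all
    then obtain h where h: "bij_betw h V' H" by blast
    define k where "k u = ns (fst u) div 2" for u :: "nat \<times> nat"
    define g where "g u = (fst u, snd u - k u)" for u
    define f where "f u = (if snd u < k u then h u else {..<n} - h (g u))" for u
    have fs: "f u = h u" if "snd u < k u" for u using that by (simp add: f_def)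
    have fl: "f u = {..<n} - h (g u)" if "\<not> snd u < k u" for u using that by (simp add: f_def)
    have large_in: "g u \<in> V'" if "u \<in> V" for u
    proof -
      have "fst u < p" "snd u < ns (fst u)" using that unfolding V_def kpart_verts_def by auto
      moreover have "ns (fst u) = 2 * k u" using ev calculation(1) unfolding k_def by simp
      ultimately show ?thesis unfolding V'_def g_def k_def[symmetric] by auto
    qed
    have small_in: "u \<in> V'" if "u \<in> V" "snd u < k u" for u
      using that unfolding V_def V'_def kpart_verts_def k_def by auto
    have hH: "h x \<subseteq> {..<n}" "n - 1 \<notin> h x" "n - 1 \<in> {..<n} - h x" if "x \<in> V'" for x
    proof -
      have "h x \<in> H" using h that unfolding bij_betw_def by auto
      then show "h x \<subseteq> {..<n}" "n - 1 \<notin> h x" "n - 1 \<in> {..<n} - h x" using assms(1) unfolding H_def by auto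
    qed
    have hinj: "x = y" if "x \<in> V'" "y \<in> V'" "h x = h y" for x y
      using h that unfolding bij_betw_def inj_on_def by blast
    have fW: "f u \<in> W" if "u \<in> V" for u
    proof (cases "snd u < k u")
      case True then show ?thesis using hH(1)[OF small_in[OF that True]] fs Wsub by simp
    next
      case False then show ?thesis using fl Wsub by simp
    qed
    have comp: "{..<n} - ({..<n} - A) = A" if "A \<subseteq> {..<n}" for A using that by auto
    have gfst: "fst (g u) = fst u" for u by (simp add: g_def)
    have ginj: "u = v" if "g u = g v" "\<not> snd u < k u" "\<not> snd v < k v" for u v
    proof -
      have "fst u = fst v" using that(1) gfst by metis
      then have "k u = k v" by (simp add: k_def)
      moreover have "snd u - k u = snd v - k v" using that(1) by (simp add: g_def)
      ultimately have "snd u = snd v" using that(2,3) by simp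
      then show ?thesis using \<open>fst u = fst v\<close> by (simp add: prod_eq_iff)
    qed
    have finj: "inj_on f V"
    proof (rule inj_onI)
      fix u v assume uv: "u \<in> V" "v \<in> V" "f u = f v"
      show "u = v"
      proof (cases "snd u < k u"; cases "snd v < k v")
        assume a: "snd u < k u" "snd v < k v"
        then show ?thesis using uv hinj small_in fs by metis
      next
        assume a: "snd u < k u" "\<not> snd v < k v"
        then have "f u = h u" "f v = {..<n} - h (g v)" using fs fl by auto
        then show ?thesis using uv hH(2)[OF small_in[OF uv(1) a(1)]] hH(3)[OF large_in[OF uv(2)]] by simp
      next
        assume a: "\<not> snd u < k u" "snd v < k v"
        then have "f v = h v" "f u = {..<n} - h (g u)" using fs fl by auto
        then show ?thesis using uv hH(2)[OF small_in[OF uv(2) a(2)]] hH(3)[OF large_in[OF uv(1)]] by simp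
      next
        assume a: "\<not> snd u < k u" "\<not> snd v < k v"
        then have "{..<n} - h (g u) = {..<n} - h (g v)" using fl uv(3) by simp
        then have "{..<n} - ({..<n} - h (g u)) = {..<n} - ({..<n} - h (g v))" by simp
        then have "h (g u) = h (g v)" using comp hH(1) large_in uv(1,2) by simp
        then have "g u = g v" using hinj large_in uv(1,2) by blast
        then show ?thesis using ginj a by blast
      qed
    qed
    have fbij: "bij_betw f V W"
    proof -
      have sub: "f ` V \<subseteq> W" using fW by auto
      moreover have "card (f ` V) = card W" using card_image[OF finj] cardV cardW by simp
      ultimately have "f ` V = W" using finW card_subset_eq by blast
      then show ?thesis using finj unfolding bij_betw_def by blast
    qed
    have nonanti: "f v \<noteq> {..<n} - f u" if "u \<in> V" "v \<in> V" "kpart_adj u v" for u v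
    proof
      assume eq: "f v = {..<n} - f u"
      have ne: "fst u \<noteq> fst v" using that(3) by (simp add: kpart_adj_def)
      show False
      proof (cases "snd u < k u"; cases "snd v < k v")
        assume a: "snd u < k u" "snd v < k v"
        then have "h v = {..<n} - h u" using eq fs by simp
        then show ?thesis using hH(2)[OF small_in[OF that(2) a(2)]] hH(3)[OF small_in[OF that(1) a(1)]] by simp
      next
        assume a: "snd u < k u" "\<not> snd v < k v"
        then have "{..<n} - h (g v) = {..<n} - h u" using eq fs fl by simp
        then have "{..<n} - ({..<n} - h (g v)) = {..<n} - ({..<n} - h u)" by simp
        then have "h (g v) = h u" using comp hH(1) large_in small_in that a by simp
        then have "g v = u" using hinj large_in small_in that a by blast
        then show ?thesis using ne gfst by metis
      next
        assume a: "\<not> snd u < k u" "snd v < k v"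
        then have "h v = {..<n} - ({..<n} - h (g u))" using eq fs fl by simp
        then have "h v = h (g u)" using comp hH(1) large_in that by simp
        then have "v = g u" using hinj large_in small_in that a by blast
        then show ?thesis using ne gfst by metis
      next
        assume a: "\<not> snd u < k u" "\<not> snd v < k v"
        then have "{..<n} - h (g v) = {..<n} - ({..<n} - h (g u))" using eq fl by simp
        then have "{..<n} - h (g v) = h (g u)" using comp hH(1) large_in that by simp
        then show ?thesis using hH(2)[OF large_in[OF that(1)]] hH(3)[OF large_in[OF that(2)]] by simp
      qed
    qed
    have dl: "dilation V kpart_adj W (cube_adj n) f \<le> n - 1"
    proof (rule dilation_le)
      fix u v assume uv: "u \<in> V" "v \<in> V" "kpart_adj u v"
      have "f u \<subseteq> {..<n}" "f v \<subseteq> {..<n}" using fW uv Wsub by auto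
      then show "graph_dist W (cube_adj n) (f u) (f v) \<le> n - 1"
        unfolding W_def using nonanti[OF uv] by (rule cube_dist_le_n1)
    qed
    have "dil V kpart_adj W (cube_adj n) \<le> dilation V kpart_adj W (cube_adj n) f"
      unfolding dil_def using fbij by (intro cInf_lower) auto
    then show ?thesis using dl by simp
  qed
  show ?thesis using part1 part2 unfolding V_def W_def by blast
qed

end
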